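(* Let $q$ be a prime power, let $M$ be an invertible $s\times s$ matrix over $\mathbb{F}_q$, and let $1\le t_i\le t_o\le s$. Then the function $\mathbf{y}=\mathbf{x}M^{-1}$ (on row vectors in $\mathbb{F}_q^s$) defines a linear $(t_i,t_o,s,q)$-AONT if and only if every $t_o\times t_i$ submatrix of $M$ has rank $t_i$.
   Context: For a bijection $\phi:\Gamma^s\to\Gamma^s$ over an alphabet $\Gamma$ of size $v$, its array representation is the $v^s\times 2s$ array having, for each $\mathbf{x}=(x_1,\dots,x_s)\in\Gamma^s$, a row $(x_1,\dots,x_s,y_1,\dots,y_s)$ with $(y_1,\dots,y_s)=\phi(\mathbf{x})$. An $N\times k$ array is unbiased with respect to a set $D$ of columns if the rows restricted to $D$ contain every $|D|$-tuple over $\Gamma$ exactly $N/v^{|D|}$ times. $\phi$ is a $(t_i,t_o,s,v)$-AONT if its array representation (columns labelled $1,\dots,2s$) is unbiased with respect to $\{1,\dots,s\}$, $\{s+1,\dots,2s\}$, and $I\cup J$ for every $I\subseteq\{1,\dots,s\}$ with $|I|=t_i$ and every $J\subseteq\{s+1,\dots,2s\}$ with $|J|=s-t_o$. A linear $(t_i,t_o,s,q)$-AONT is one over $\Gamma=\mathbb{F}_q$ of the form $\mathbf{x}\mapsto\mathbf{x}M^{-1}$ for an invertible $s\times s$ matrix $M$ over $\mathbb{F}_q$ (so that $\mathbf{x}=\mathbf{y}M$). *)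

theory Defs
  imports "Jordan_Normal_Form.DL_Rank" "Jordan_Normal_Form.DL_Submatrix"
    "Jordan_Normal_Form.Gauss_Jordan_Elimination"
begin

definition vec_mat :: "'a::semiring_0 vec \<Rightarrow> 'a mat \<Rightarrow> 'a vec" where
  "vec_mat x A = vec (dim_col A) (\<lambda>j. x \<bullet> col A j)"

(* Entry in column c (0-based, columns 0..2s-1) of the row of the array
   representation of phi indexed by x: first s columns are x, last s are phi x. *)
definition array_entry :: "nat \<Rightarrow> ('a vec \<Rightarrow> 'a vec) \<Rightarrow> 'a vec \<Rightarrow> nat \<Rightarrow> 'a" where
  "array_entry s \<phi> x c = (if c < s then x $ c else \<phi> x $ (c - s))"

(* The v^s x 2s array representation (alphabet = UNIV of the finite type 'a)
   is unbiased w.r.t. the column set D: every |D|-tuple over 'a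
   (a function u on D) occurs exactly N / v^|D| times, N = v^s. *)
definition unbiased :: "nat \<Rightarrow> ('a::finite vec \<Rightarrow> 'a vec) \<Rightarrow> nat set \<Rightarrow> bool" where
  "unbiased s \<phi> D \<longleftrightarrow>
     (\<forall>u :: nat \<Rightarrow> 'a.
        card {x \<in> carrier_vec s. \<forall>c\<in>D. array_entry s \<phi> x c = u c} * card (UNIV :: 'a set) ^ card D
          = card (UNIV :: 'a set) ^ s)"

definition AONT :: "nat \<Rightarrow> nat \<Rightarrow> nat \<Rightarrow> ('a::finite vec \<Rightarrow> 'a vec) \<Rightarrow> bool" where
  "AONT ti to s \<phi> \<longleftrightarrow>
     bij_betw \<phi> (carrier_vec s) (carrier_vec s) \<and>
     unbiased s \<phi> {0..<s} \<and> unbiased s \<phi> {s..<2*s} \<and>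
     (\<forall>I J. I \<subseteq> {0..<s} \<longrightarrow> card I = ti \<longrightarrow> J \<subseteq> {s..<2*s} \<longrightarrow> card J = s - to \<longrightarrow>
        unbiased s \<phi> (I \<union> J))"

definition linear_aont_map :: "'a::field mat \<Rightarrow> 'a vec \<Rightarrow> 'a vec" where
  "linear_aont_map M x = vec_mat x (the (mat_inverse M))"

end

theory Submission
  imports Defs
begin


lemma vec_mat_transpose:
  fixes A :: "'a::comm_semiring_0 mat"
  assumes "x \<in> carrier_vec (dim_row A)"
  shows "vec_mat x A = transpose_mat A *\<^sub>v x"
  unfolding vec_mat_def
proof (rule eq_vecI)
  fix i assume "i < dim_vec (transpose_mat A *\<^sub>v x)"
  then show "vec (dim_col A) (\<lambda>j. x \<bullet> col A j) $ i = (transpose_mat A *\<^sub>v x) $ i"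
    using assms comm_scalar_prod[OF assms col_dim[of A i]] by auto
qed auto

lemma vec_mat_carrier[simp]: "vec_mat x A \<in> carrier_vec (dim_col A)"
  unfolding vec_mat_def by simp

lemma vec_mat_dim[simp]: "dim_vec (vec_mat x A) = dim_col A"
  unfolding vec_mat_def by simp

lemma vec_mat_index: "j < dim_col A \<Longrightarrow> vec_mat x A $ j = x \<bullet> col A j"
  unfolding vec_mat_def by simp

lemma vec_mat_add:
  assumes "x \<in> carrier_vec (dim_row A)" "y \<in> carrier_vec (dim_row A)"
  shows "vec_mat (x + y) A = vec_mat x A + vec_mat y A"
  using assms by (auto simp: vec_mat_def add_scalar_prod_distrib[of _ "dim_row A"])

lemma vec_mat_assoc:
  fixes A :: "'a::comm_semiring_0 mat"
  assumes "x \<in> carrier_vec n" "A \<in> carrier_mat n k" "B \<in> carrier_mat k l"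
  shows "vec_mat (vec_mat x A) B = vec_mat x (A * B)"
proof -
  have "vec_mat (vec_mat x A) B = transpose_mat B *\<^sub>v (transpose_mat A *\<^sub>v x)"
    using assms by (simp add: vec_mat_transpose)
  also have "\<dots> = (transpose_mat B * transpose_mat A) *\<^sub>v x"
    using assms by (intro assoc_mult_mat_vec[of _ l k _ n, symmetric]) auto
  also have "\<dots> = transpose_mat (A * B) *\<^sub>v x"
    using assms by (simp add: transpose_mult[of A n k B l])
  also have "\<dots> = vec_mat x (A * B)" using assms by (simp add: vec_mat_transpose)
  finally show ?thesis .
qed

lemma vec_mat_one: "(x::'a::comm_semiring_1 vec) \<in> carrier_vec n \<Longrightarrow> vec_mat x (1\<^sub>m n) = x"
  by (simp add: vec_mat_transpose one_mult_mat_vec)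

lemma inverse_facts:
  fixes M :: "'a::field mat"
  assumes M: "M \<in> carrier_mat s s" and inv: "invertible_mat M"
  shows "the (mat_inverse M) \<in> carrier_mat s s \<and> M * the (mat_inverse M) = 1\<^sub>m s
     \<and> the (mat_inverse M) * M = 1\<^sub>m s"
proof -
  obtain B where B: "M * B = 1\<^sub>m (dim_row M)" "B * M = 1\<^sub>m (dim_row B)"
    using inv unfolding invertible_mat_def inverts_mat_def by auto
  have Bc: "B \<in> carrier_mat s s"
    using B M by (metis carrier_matD carrier_matI index_mult_mat(2,3) index_one_mat(2,3))
  have "M \<in> Units (ring_mat TYPE('a) s undefined)"
    using B Bc M unfolding Units_def ring_mat_def by auto
  then obtain C where "mat_inverse M = Some C"
    using mat_inverse(1)[OF M] by fastforce
  then show ?thesis using mat_inverse(2)[OF M] by auto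
qed

lemma card_carrier_vec': "card (carrier_vec n:: 'b::finite vec set) = card (UNIV :: 'b set) ^ n"
proof -
  let ?A = "UNIV::'b set"
  let ?B = "{xs. set xs \<subseteq> ?A \<and> length xs = n}"
  let ?C = "(carrier_vec n:: 'b::finite vec set)"
  have "bij_betw list_of_vec ?C ?B"
    unfolding bij_betw_def inj_on_def
    by (auto simp: image_def) (metis vec_list, metis list_vec carrier_vec_def mem_Collect_eq dim_vec_of_list)
  then have "card ?C = card ?B" using bij_betw_same_card by blast
  also have "... = card ?A ^ n"
    by (rule card_lists_length_eq, simp)
  finally show ?thesis .
qed

lemma finite_carrier_vec': "finite (carrier_vec n :: 'b::finite vec set)"
  by (rule card_ge_0_finite) (simp add: card_carrier_vec' finite_UNIV_card_ge_0)



lemma unbiased_iff_surj: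
  fixes \<phi> :: "'a::{finite,field} vec \<Rightarrow> 'a vec"
  assumes add: "\<And>x y c. x \<in> carrier_vec s \<Longrightarrow> y \<in> carrier_vec s \<Longrightarrow> c \<in> D \<Longrightarrow>
      array_entry s \<phi> (x+y) c = array_entry s \<phi> x c + array_entry s \<phi> y c"
  and fin: "finite D"
  shows "unbiased s \<phi> D \<longleftrightarrow> (\<forall>u. \<exists>x\<in>carrier_vec s. \<forall>c\<in>D. array_entry s \<phi> x c = u c)"
proof -
  define e where "e = array_entry s \<phi>"
  define S where "S u = {x \<in> carrier_vec s. \<forall>c\<in>D. e x c = u c}" for u :: "nat \<Rightarrow> 'a"
  define q where "q = card (UNIV :: 'a set)"
  have qpos: "q > 0" unfolding q_def by (simp add: finite_UNIV_card_ge_0)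
  have finS: "finite (S u)" for u unfolding S_def
    by (rule finite_subset[OF _ finite_carrier_vec']) auto
  show ?thesis
  proof
    assume ub: "unbiased s \<phi> D"
    show "\<forall>u. \<exists>x\<in>carrier_vec s. \<forall>c\<in>D. array_entry s \<phi> x c = u c"
    proof
      fix u :: "nat \<Rightarrow> 'a"
      have "card (S u) * q ^ card D = q ^ s"
        using ub unfolding unbiased_def S_def e_def q_def by blast
      then have "card (S u) \<noteq> 0" using qpos by (metis mult_0 power_not_zero less_not_refl2)
      then have "S u \<noteq> {}" by auto
      then show "\<exists>x\<in>carrier_vec s. \<forall>c\<in>D. array_entry s \<phi> x c = u c"
        unfolding S_def e_def by auto
    qed
  next
    assume sj: "\<forall>u. \<exists>x\<in>carrier_vec s. \<forall>c\<in>D. array_entry s \<phi> x c = u c"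
    define K where "K = card (S (\<lambda>_. 0))"
    have cardS: "card (S u) = K" for u
    proof -
      obtain x0 where x0: "x0 \<in> carrier_vec s" "\<forall>c\<in>D. e x0 c = u c"
        using sj unfolding e_def by blast
      have "bij_betw (\<lambda>y. y + x0) (S (\<lambda>_. 0)) (S u)"
      proof (rule bij_betw_byWitness[where f' = "\<lambda>y. y - x0"])
        show "\<forall>a\<in>S (\<lambda>_. 0). a + x0 - x0 = a"
          using x0 unfolding S_def by (auto intro!: eq_vecI)
        show "\<forall>a\<in>S u. a - x0 + x0 = a"
          using x0 unfolding S_def by (auto intro!: eq_vecI)
        show "(\<lambda>y. y + x0) ` S (\<lambda>_. 0) \<subseteq> S u"
          using x0 add unfolding S_def e_def by auto
        show "(\<lambda>y. y - x0) ` S u \<subseteq> S (\<lambda>_. 0)"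
        proof
          fix z assume "z \<in> (\<lambda>y. y - x0) ` S u"
          then obtain y where y: "y \<in> S u" "z = y - x0" by auto
          have yc: "y \<in> carrier_vec s" using y unfolding S_def by auto
          have zc: "z \<in> carrier_vec s" using y yc x0 by auto
          have "z + x0 = y" using y yc x0 by (auto intro!: eq_vecI)
          then have "e y c = e z c + e x0 c" if "c \<in> D" for c
            using add[OF zc x0(1) that] unfolding e_def by simp
          then show "z \<in> S (\<lambda>_. 0)" using y(1) x0 zc unfolding S_def by auto
        qed
      qed
      then show ?thesis unfolding K_def by (simp add: bij_betw_same_card)
    qed
    let ?P = "PiE D (\<lambda>_. UNIV :: 'a set)"
    have union: "carrier_vec s = (\<Union>u\<in>?P. S u)"
    proof
      show "carrier_vec s \<subseteq> (\<Union>u\<in>?P. S u)"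
      proof
        fix x :: "'a vec" assume x: "x \<in> carrier_vec s"
        have "restrict (e x) D \<in> ?P" by auto
        moreover have "x \<in> S (restrict (e x) D)" using x unfolding S_def by auto
        ultimately show "x \<in> (\<Union>u\<in>?P. S u)" by blast
      qed
    qed (auto simp: S_def)
    have disj: "\<forall>u\<in>?P. \<forall>v\<in>?P. u \<noteq> v \<longrightarrow> S u \<inter> S v = {}"
    proof (intro ballI impI)
      fix u v assume u: "u \<in> ?P" and v: "v \<in> ?P" and uv: "u \<noteq> v"
      then obtain c where "c \<in> D" "u c \<noteq> v c" using PiE_ext by metis
      then show "S u \<inter> S v = {}" unfolding S_def by auto
    qed
    have "q ^ s = card (carrier_vec s :: 'a vec set)"
      unfolding q_def by (simp add: card_carrier_vec')
    also have "\<dots> = (\<Sum>u\<in>?P. card (S u))"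
      unfolding union by (rule card_UN_disjoint) (use fin finS disj in \<open>auto intro: finite_PiE\<close>)
    also have "\<dots> = card ?P * K" using cardS by simp
    also have "card ?P = q ^ card D"
      using fin by (simp add: card_PiE q_def)
    finally have key: "q ^ s = q ^ card D * K" .
    show "unbiased s \<phi> D"
      unfolding unbiased_def
    proof
      fix u :: "nat \<Rightarrow> 'a"
      show "card {x \<in> carrier_vec s. \<forall>c\<in>D. array_entry s \<phi> x c = u c} * card (UNIV :: 'a set) ^ card D
          = card (UNIV :: 'a set) ^ s"
        using cardS[of u] key unfolding S_def e_def q_def by (simp add: mult.commute)
    qed
  qed
qed



lemma subspace_perp:
  fixes W :: "'a::field vec set"
  assumes "W \<subseteq> carrier_vec n" "0\<^sub>v n \<in> W" "\<forall>x\<in>W. \<forall>y\<in>W. x + y \<in> W" "\<forall>c. \<forall>x\<in>W. c \<cdot>\<^sub>v x \<in> W"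
  shows "W = carrier_vec n \<or> (\<exists>v\<in>carrier_vec n. v \<noteq> 0\<^sub>v n \<and> (\<forall>w\<in>W. v \<bullet> w = 0))"
  using assms
proof (induction n arbitrary: W)
  case 0
  have "carrier_vec 0 = {0\<^sub>v 0 :: 'a vec}" by (auto intro!: eq_vecI)
  then show ?case using 0 by auto
next
  case (Suc n)
  have sp: "\<And>v w. v \<in> carrier_vec (Suc n) \<Longrightarrow> w \<in> carrier_vec (Suc n) \<Longrightarrow>
     v \<bullet> w = (\<Sum>i<n. v $ i * w $ i) + v $ n * w $ n"
    by (simp add: scalar_prod_def lessThan_atLeast0)
  show ?case
  proof (cases "\<forall>w\<in>W. w $ n = 0")
    case True
    have "unit_vec (Suc n) n \<noteq> 0\<^sub>v (Suc n)" by simp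
    moreover have "\<forall>w\<in>W. unit_vec (Suc n) n \<bullet> w = 0"
      using True Suc.prems(1) by (auto simp: scalar_prod_left_unit)
    ultimately show ?thesis by (intro disjI2 bexI[of _ "unit_vec (Suc n) n"]) auto
  next
    case False
    then obtain w0 where w0: "w0 \<in> W" "w0 $ n \<noteq> 0" by auto
    define w1 where "w1 = (1 / w0 $ n) \<cdot>\<^sub>v w0"
    have w1: "w1 \<in> W" "w1 $ n = 1" "w1 \<in> carrier_vec (Suc n)"
      using w0 Suc.prems unfolding w1_def by auto
    define W' where "W' = (\<lambda>w. vec n (\<lambda>i. w $ i)) ` {w\<in>W. w $ n = 0}"
    have Wc: "w \<in> W \<Longrightarrow> w \<in> carrier_vec (Suc n)" for w using Suc.prems by auto
    have "W' \<subseteq> carrier_vec n" unfolding W'_def by auto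
    moreover have "0\<^sub>v n \<in> W'"
      unfolding W'_def using Suc.prems(2)
      by (intro image_eqI[of _ _ "0\<^sub>v (Suc n)"]) (auto intro!: eq_vecI)
    moreover have "\<forall>x\<in>W'. \<forall>y\<in>W'. x + y \<in> W'"
    proof (intro ballI)
      fix x y assume "x \<in> W'" "y \<in> W'"
      then obtain a b where ab: "a \<in> W" "a $ n = 0" "x = vec n (\<lambda>i. a $ i)"
        "b \<in> W" "b $ n = 0" "y = vec n (\<lambda>i. b $ i)" unfolding W'_def by auto
      then show "x + y \<in> W'" unfolding W'_def
        using Suc.prems(3) Wc[of a] Wc[of b]
        by (intro image_eqI[of _ _ "a + b"]) (auto intro!: eq_vecI)
    qed
    moreover have "\<forall>c. \<forall>x\<in>W'. c \<cdot>\<^sub>v x \<in> W'"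
    proof (intro allI ballI)
      fix c x assume "x \<in> W'"
      then obtain a where ab: "a \<in> W" "a $ n = 0" "x = vec n (\<lambda>i. a $ i)"
        unfolding W'_def by auto
      then show "c \<cdot>\<^sub>v x \<in> W'" unfolding W'_def
        using Suc.prems(4) Wc[of a]
        by (intro image_eqI[of _ _ "c \<cdot>\<^sub>v a"]) (auto intro!: eq_vecI)
    qed
    ultimately have IH: "W' = carrier_vec n \<or> (\<exists>v\<in>carrier_vec n. v \<noteq> 0\<^sub>v n \<and> (\<forall>w\<in>W'. v \<bullet> w = 0))"
      using Suc.IH by blast
    have dec: "w + (- (w $ n)) \<cdot>\<^sub>v w1 \<in> W \<and> (w + (- (w $ n)) \<cdot>\<^sub>v w1) $ n = 0"
      if "w \<in> W" for w
      using that w1 Suc.prems(3,4) Wc[OF that] by auto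
    show ?thesis
    proof (cases "W' = carrier_vec n")
      case True
      have "carrier_vec (Suc n) \<subseteq> W"
      proof
        fix x :: "'a vec" assume x: "x \<in> carrier_vec (Suc n)"
        have "vec n (\<lambda>i. x $ i - x $ n * w1 $ i) \<in> W'" using True by auto
        then obtain w where w: "w \<in> W" "w $ n = 0" "vec n (\<lambda>i. w $ i) = vec n (\<lambda>i. x $ i - x $ n * w1 $ i)"
          unfolding W'_def by auto
        have "x = w + (x $ n) \<cdot>\<^sub>v w1"
        proof (rule eq_vecI)
          fix i assume "i < dim_vec (w + (x $ n) \<cdot>\<^sub>v w1)"
          then have i: "i < Suc n" using w1 by auto
          show "x $ i = (w + (x $ n) \<cdot>\<^sub>v w1) $ i"
          proof (cases "i < n")
            case True
            then have "w $ i = x $ i - x $ n * w1 $ i"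
              using arg_cong[OF w(3), of "\<lambda>v. v $ i"] by simp
            then show ?thesis using i w1 Wc[OF w(1)] by auto
          next
            case False
            then have "i = n" using i by auto
            then show ?thesis using i w1 w Wc[OF w(1)] by auto
          qed
        qed (use x w1 Wc[OF w(1)] in auto)
        then show "x \<in> W" using Suc.prems(3,4) w(1) w1(1) by metis
      qed
      then show ?thesis using Suc.prems(1) by auto
    next
      case False
      then obtain v' where v': "v' \<in> carrier_vec n" "v' \<noteq> 0\<^sub>v n" "\<forall>w\<in>W'. v' \<bullet> w = 0"
        using IH by auto
      define c where "c = (\<Sum>i<n. v' $ i * w1 $ i)"
      define v where "v = vec (Suc n) (\<lambda>i. if i < n then v' $ i else - c)"
      have vc: "v \<in> carrier_vec (Suc n)" unfolding v_def by auto
      have "v \<noteq> 0\<^sub>v (Suc n)"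
      proof
        assume "v = 0\<^sub>v (Suc n)"
        have "v' $ i = 0" if "i < n" for i
          using arg_cong[OF \<open>v = 0\<^sub>v (Suc n)\<close>, of "\<lambda>x. x $ i"] that by (simp add: v_def)
        then have "v' = 0\<^sub>v n"
          using v'(1) by (intro eq_vecI) auto
        then show False using v' by auto
      qed
      moreover have "\<forall>w\<in>W. v \<bullet> w = 0"
      proof
        fix w assume w: "w \<in> W"
        let ?z = "w + (- (w $ n)) \<cdot>\<^sub>v w1"
        have "vec n (\<lambda>i. ?z $ i) \<in> W'" unfolding W'_def using dec[OF w] by auto
        then have "v' \<bullet> vec n (\<lambda>i. ?z $ i) = 0" using v' by auto
        then have "(\<Sum>i<n. v' $ i * (w $ i - w $ n * w1 $ i)) = 0"
          using v'(1) w1 Wc[OF w] by (simp add: scalar_prod_def lessThan_atLeast0 algebra_simps)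
        then have e: "(\<Sum>i<n. v' $ i * w $ i) = w $ n * c"
          unfolding c_def by (simp add: algebra_simps sum_subtractf sum_distrib_left)
        have "v \<bullet> w = (\<Sum>i<n. v $ i * w $ i) + v $ n * w $ n"
          using sp[OF vc Wc[OF w]] .
        also have "(\<Sum>i<n. v $ i * w $ i) = (\<Sum>i<n. v' $ i * w $ i)"
          unfolding v_def by (intro sum.cong) auto
        finally show "v \<bullet> w = 0" using e unfolding v_def by simp
      qed
      ultimately show ?thesis using vc by blast
    qed
  qed
qed



lemma scalar_transpose_identity:
  fixes A :: "'a::comm_ring_1 mat"
  assumes A: "A \<in> carrier_mat m n" and v: "v \<in> carrier_vec n" and z: "z \<in> carrier_vec m"
  shows "v \<bullet> (transpose_mat A *\<^sub>v z) = z \<bullet> (A *\<^sub>v v)"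
proof -
  have e: "transpose_mat A *\<^sub>v z = vec n (\<lambda>j. z \<bullet> col A j)"
    using vec_mat_transpose[of z A] A z unfolding vec_mat_def by auto
  have "v \<bullet> (transpose_mat A *\<^sub>v z) = (transpose_mat A *\<^sub>v z) \<bullet> v"
    using A v z by (intro comm_scalar_prod[of _ n]) auto
  also have "\<dots> = vec n (\<lambda>j. z \<bullet> col A j) \<bullet> v" using e by simp
  also have "vec n (\<lambda>j. z \<bullet> col A j) \<bullet> v = z \<bullet> vec m (\<lambda>i. row A i \<bullet> v)"
    by (rule assoc_scalar_prod[OF z A v])
  also have "vec m (\<lambda>i. row A i \<bullet> v) = A *\<^sub>v v"
    using A by (auto simp: mult_mat_vec_def)
  finally show ?thesis .
qed

definition inj_mat :: "'a::field mat \<Rightarrow> nat \<Rightarrow> nat \<Rightarrow> bool" where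
  "inj_mat A m n \<longleftrightarrow> (\<forall>v\<in>carrier_vec n. A *\<^sub>v v = 0\<^sub>v m \<longrightarrow> v = 0\<^sub>v n)"

definition surjT_mat :: "'a::field mat \<Rightarrow> nat \<Rightarrow> nat \<Rightarrow> bool" where
  "surjT_mat A m n \<longleftrightarrow> (\<forall>w\<in>carrier_vec n. \<exists>z\<in>carrier_vec m. transpose_mat A *\<^sub>v z = w)"

lemma surjT_imp_inj:
  fixes A :: "'a::field mat"
  assumes A: "A \<in> carrier_mat m n" and s: "surjT_mat A m n"
  shows "inj_mat A m n"
  unfolding inj_mat_def
proof (intro ballI impI)
  fix v :: "'a vec" assume v: "v \<in> carrier_vec n" and Av: "A *\<^sub>v v = 0\<^sub>v m"
  show "v = 0\<^sub>v n"
  proof (rule eq_vecI)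
    fix b assume "b < dim_vec (0\<^sub>v n :: 'a vec)"
    then have b: "b < n" by simp
    obtain z where z: "z \<in> carrier_vec m" "transpose_mat A *\<^sub>v z = unit_vec n b"
      using s unfolding surjT_mat_def by (meson unit_vec_carrier)
    have "v $ b = v \<bullet> unit_vec n b" using v b by simp
    also have "\<dots> = z \<bullet> (A *\<^sub>v v)" using scalar_transpose_identity[OF A v z(1)] z(2) by simp
    also have "\<dots> = 0" using Av z by simp
    finally show "v $ b = 0\<^sub>v n $ b" using b by simp
  qed (use v in auto)
qed

lemma inj_imp_surjT:
  fixes A :: "'a::field mat"
  assumes A: "A \<in> carrier_mat m n" and i: "inj_mat A m n"
  shows "surjT_mat A m n"
proof -
  define W where "W = (\<lambda>z. transpose_mat A *\<^sub>v z) ` carrier_vec m"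
  have "W \<subseteq> carrier_vec n" unfolding W_def using A by auto
  moreover have "0\<^sub>v n \<in> W" unfolding W_def using A
    by (intro image_eqI[of _ _ "0\<^sub>v m"]) auto
  moreover have "\<forall>x\<in>W. \<forall>y\<in>W. x + y \<in> W"
  proof (intro ballI)
    fix x y assume "x \<in> W" "y \<in> W"
    then obtain a b where "a \<in> carrier_vec m" "b \<in> carrier_vec m"
      "x = transpose_mat A *\<^sub>v a" "y = transpose_mat A *\<^sub>v b" unfolding W_def by auto
    then show "x + y \<in> W" unfolding W_def using A
      by (intro image_eqI[of _ _ "a + b"]) (auto simp: mult_add_distrib_mat_vec[of _ n m])
  qed
  moreover have "\<forall>c. \<forall>x\<in>W. c \<cdot>\<^sub>v x \<in> W"
  proof (intro allI ballI)
    fix c x assume "x \<in> W"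
    then obtain a where "a \<in> carrier_vec m" "x = transpose_mat A *\<^sub>v a" unfolding W_def by auto
    then show "c \<cdot>\<^sub>v x \<in> W" unfolding W_def using A
      by (intro image_eqI[of _ _ "c \<cdot>\<^sub>v a"]) (auto simp: mult_mat_vec[of _ n m])
  qed
  ultimately have "W = carrier_vec n \<or> (\<exists>v\<in>carrier_vec n. v \<noteq> 0\<^sub>v n \<and> (\<forall>w\<in>W. v \<bullet> w = 0))"
    by (rule subspace_perp)
  moreover have False if v: "v \<in> carrier_vec n" "v \<noteq> 0\<^sub>v n" "\<forall>w\<in>W. v \<bullet> w = 0" for v
  proof -
    have "A *\<^sub>v v = 0\<^sub>v m"
    proof (rule eq_vecI)
      fix i assume "i < dim_vec (0\<^sub>v m :: 'a vec)"
      then have i: "i < m" by simp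
      have "transpose_mat A *\<^sub>v unit_vec m i \<in> W"
        unfolding W_def by (rule imageI) simp
      then have "0 = v \<bullet> (transpose_mat A *\<^sub>v unit_vec m i)"
        using v(3) by simp
      also have "\<dots> = unit_vec m i \<bullet> (A *\<^sub>v v)"
        by (rule scalar_transpose_identity[OF A v(1)]) simp
      also have "\<dots> = (A *\<^sub>v v) $ i"
        by (rule scalar_prod_left_unit) (use A i v(1) in auto)
      finally show "(A *\<^sub>v v) $ i = 0\<^sub>v m $ i" using i by simp
    qed (use A in simp)
    then show False using i v unfolding inj_mat_def by blast
  qed
  ultimately have "W = carrier_vec n" by blast
  then show ?thesis unfolding surjT_mat_def W_def by (metis imageE)
qed

lemma (in vec_space) rank_lt_nondistinct:
  assumes A: "A \<in> carrier_mat n nc" and nd: "\<not> distinct (cols A)"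
  shows "rank A < nc"
proof -
  obtain S where S: "maximal S (\<lambda>T. T \<subseteq> set (cols A) \<and> lin_indpt T)"
    using maximal_exists[of "(\<lambda>T. T \<subseteq> set (cols A) \<and> lin_indpt T)" "card (set (cols A))" "{}"]
    by (meson List.finite_set card_mono empty_iff empty_subsetI finite_lin_indpt2 rev_finite_subset)
  then have "card S \<le> card (set (cols A))" by (simp add: card_mono maximal_def)
  also have "\<dots> < length (cols A)"
    using nd card_length card_distinct le_neq_implies_less by blast
  also have "\<dots> = nc" using A by simp
  finally show ?thesis using rank_card_indpt[OF A S] by simp
qed

lemma mat_unit:
  fixes A :: "'a::comm_ring_1 mat"
  assumes "A \<in> carrier_mat m n" "j < n"
  shows "A *\<^sub>v unit_vec n j = col A j"
  by (rule eq_vecI) (use assms in auto)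

lemma rank_iff_inj:
  fixes A :: "'a::field mat"
  assumes A: "A \<in> carrier_mat m n"
  shows "vec_space.rank m A = n \<longleftrightarrow> inj_mat A m n"
proof
  assume r: "vec_space.rank m A = n"
  have dist: "distinct (cols A)"
  proof (rule ccontr)
    assume nd: "\<not> distinct (cols A)"
    show False using vec_space.rank_lt_nondistinct[OF A nd] r by simp
  qed
  show "inj_mat A m n"
    unfolding inj_mat_def
  proof (intro ballI impI, rule ccontr)
    fix v assume "v \<in> carrier_vec n" "A *\<^sub>v v = 0\<^sub>v m" "v \<noteq> 0\<^sub>v n"
    then have "module.lin_dep class_ring (module_vec TYPE('a) m) (set (cols A))"
      using vec_space.lin_depI[OF A _ _ _ dist] by blast
    moreover have "module.lin_indpt class_ring (module_vec TYPE('a) m) (set (cols A))"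
      using vec_space.full_rank_lin_indpt[OF A r dist] .
    ultimately show False by blast
  qed
next
  assume i: "inj_mat A m n"
  have dist: "distinct (cols A)"
  proof (rule ccontr)
    assume "\<not> distinct (cols A)"
    then obtain a b where ab: "a < length (cols A)" "b < length (cols A)" "a \<noteq> b" "cols A ! a = cols A ! b"
      using distinct_conv_nth by metis
    then have abn: "a < n" "b < n" using A by auto
    let ?v = "unit_vec n a - unit_vec n b :: 'a vec"
    have "?v \<noteq> 0\<^sub>v n"
    proof
      assume "?v = 0\<^sub>v n"
      then have "?v $ a = 0\<^sub>v n $ a" by (rule arg_cong[where f="\<lambda>x. x $ a"])
      then show False using abn ab(3) by simp
    qed
    moreover have "?v \<in> carrier_vec n" by simp
    moreover have "A *\<^sub>v ?v = 0\<^sub>v m"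
    proof -
      have "A *\<^sub>v ?v = A *\<^sub>v unit_vec n a - A *\<^sub>v unit_vec n b"
        by (rule mult_minus_distrib_mat_vec[OF A]) auto
      also have "\<dots> = col A a - col A b" using A abn by (simp add: mat_unit)
      also have "col A a = col A b" using ab abn A by simp
      also have "col A b - col A b = 0\<^sub>v m" using A by (intro eq_vecI) auto
      finally show ?thesis .
    qed
    ultimately show False using i unfolding inj_mat_def by blast
  qed
  have "module.lin_indpt class_ring (module_vec TYPE('a) m) (set (cols A))"
  proof
    assume "module.lin_dep class_ring (module_vec TYPE('a) m) (set (cols A))"
    then obtain v where "v \<in> carrier_vec n" "v \<noteq> 0\<^sub>v n" "A *\<^sub>v v = 0\<^sub>v m"
      using vec_space.lin_depE[OF A _ dist] by blast
    then show False using i unfolding inj_mat_def by blast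
  qed
  then show "vec_space.rank m A = n" using vec_space.lin_indpt_full_rank[OF A dist] by blast
qed



lemma pick_bij:
  assumes "finite R"
  shows "bij_betw (pick R) {0..<card R} R"
proof (rule bij_betw_imageI)
  show "inj_on (pick R) {0..<card R}"
  proof (rule inj_onI)
    fix a b assume a: "a \<in> {0..<card R}" and b: "b \<in> {0..<card R}" and e: "pick R a = pick R b"
    have a': "a < card R" using a by simp
    have b': "b < card R" using b by simp
    have "a = card {x\<in>R. x < pick R a}" using card_pick_le[OF a'] by (rule sym)
    also have "\<dots> = card {x\<in>R. x < pick R b}" by (simp only: e)
    also have "\<dots> = b" using card_pick_le[OF b'] .
    finally show "a = b" .
  qed
  show "pick R ` {0..<card R} = R"
  proof
    show "pick R ` {0..<card R} \<subseteq> R"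
    proof
      fix x assume "x \<in> pick R ` {0..<card R}"
      then obtain a where "a < card R" "x = pick R a" by auto
      then show "x \<in> R" using pick_in_set_le by simp
    qed
    show "R \<subseteq> pick R ` {0..<card R}"
    proof
      fix r assume r: "r \<in> R"
      have "{a\<in>R. a < r} \<subset> R" using r by auto
      then have lt: "card {a\<in>R. a < r} < card R" using assms by (simp add: psubset_card_mono)
      have "r = pick R (card {a\<in>R. a < r})" using pick_card_in_set[OF r] by (rule sym)
      moreover have "card {a\<in>R. a < r} \<in> {0..<card R}" using lt by simp
      ultimately show "r \<in> pick R ` {0..<card R}" by (rule image_eqI)
    qed
  qed
qed

lemma submatrix_carrier':
  assumes "M \<in> carrier_mat s s" "R \<subseteq> {0..<s}" "C \<subseteq> {0..<s}"
  shows "submatrix M R C \<in> carrier_mat (card R) (card C)"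
proof -
  have "dim_row M = s" "dim_col M = s" using assms(1) by auto
  moreover have "{i. i < s \<and> i \<in> R} = R" "{i. i < s \<and> i \<in> C} = C" using assms(2,3) by auto
  ultimately show ?thesis by (intro carrier_matI) (simp_all only: dim_submatrix)
qed

lemma L_sum:
  fixes M :: "'a::field mat"
  assumes M: "M \<in> carrier_mat s s" and R: "R \<subseteq> {0..<s}" and C: "C \<subseteq> {0..<s}"
    and z: "z \<in> carrier_vec s" and zR: "\<forall>j<s. j \<notin> R \<longrightarrow> z $ j = 0" and b: "b < card C"
  shows "vec_mat z M $ pick C b =
    (transpose_mat (submatrix M R C) *\<^sub>v vec (card R) (\<lambda>a. z $ pick R a)) $ b"
proof -
  have finR: "finite R" using R finite_subset by blast
  have finC: "finite C" using C finite_subset by blast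
  have A: "submatrix M R C \<in> carrier_mat (card R) (card C)" by (rule submatrix_carrier'[OF M R C])
  have pc: "pick C b \<in> C" using pick_in_set_le[OF b] .
  then have pcs: "pick C b < s" using C by auto
  have cardR: "card {i. i < dim_row M \<and> i \<in> R} = card R" "card {i. i < dim_col M \<and> i \<in> C} = card C"
  proof -
    have "{i. i < dim_row M \<and> i \<in> R} = R" "{i. i < dim_col M \<and> i \<in> C} = C" using M R C by auto
    then show "card {i. i < dim_row M \<and> i \<in> R} = card R" "card {i. i < dim_col M \<and> i \<in> C} = card C" by simp_all
  qed
  have "vec_mat z M $ pick C b = (\<Sum>j\<in>{0..<s}. z $ j * M $$ (j, pick C b))"
    using M z pcs by (simp add: vec_mat_index scalar_prod_def)
  also have "\<dots> = (\<Sum>j\<in>R. z $ j * M $$ (j, pick C b))"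
    using zR R by (intro sum.mono_neutral_right) auto
  also have "\<dots> = (\<Sum>a\<in>{0..<card R}. z $ pick R a * M $$ (pick R a, pick C b))"
    using sum.reindex_bij_betw[OF pick_bij[OF finR], of "\<lambda>j. z $ j * M $$ (j, pick C b)"] by simp
  also have "\<dots> = (\<Sum>a\<in>{0..<card R}. submatrix M R C $$ (a, b) * vec (card R) (\<lambda>a. z $ pick R a) $ a)"
    using b cardR by (intro sum.cong) (auto simp: submatrix_index mult.commute)
  also have "\<dots> = (transpose_mat (submatrix M R C) *\<^sub>v vec (card R) (\<lambda>a. z $ pick R a)) $ b"
    using A b by (simp add: scalar_prod_def)
  finally show ?thesis .
qed

definition surj2 :: "'a::field mat \<Rightarrow> nat \<Rightarrow> nat set \<Rightarrow> nat set \<Rightarrow> bool" where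
  "surj2 M s R C \<longleftrightarrow> (\<forall>w::nat \<Rightarrow> 'a. \<exists>z\<in>carrier_vec s. (\<forall>j<s. j \<notin> R \<longrightarrow> z $ j = 0)
      \<and> (\<forall>i\<in>C. vec_mat z M $ i = w i))"

lemma surj2_iff:
  fixes M :: "'a::field mat"
  assumes M: "M \<in> carrier_mat s s" and R: "R \<subseteq> {0..<s}" and C: "C \<subseteq> {0..<s}"
  shows "surj2 M s R C \<longleftrightarrow> surjT_mat (submatrix M R C) (card R) (card C)"
proof
  assume S: "surj2 M s R C"
  show "surjT_mat (submatrix M R C) (card R) (card C)"
    unfolding surjT_mat_def
  proof
    fix w' :: "'a vec" assume w': "w' \<in> carrier_vec (card C)"
    obtain z where z: "z \<in> carrier_vec s" "\<forall>j<s. j \<notin> R \<longrightarrow> z $ j = 0"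
      "\<forall>i\<in>C. vec_mat z M $ i = w' $ card {c\<in>C. c < i}"
      using S unfolding surj2_def by (erule_tac x="\<lambda>i. w' $ card {c\<in>C. c < i}" in allE) blast
    show "\<exists>z'\<in>carrier_vec (card R). transpose_mat (submatrix M R C) *\<^sub>v z' = w'"
    proof (intro bexI[of _ "vec (card R) (\<lambda>a. z $ pick R a)"] eq_vecI)
      fix b assume "b < dim_vec w'"
      then have b: "b < card C" using w' by simp
      have "(transpose_mat (submatrix M R C) *\<^sub>v vec (card R) (\<lambda>a. z $ pick R a)) $ b
          = vec_mat z M $ pick C b" using L_sum[OF M R C z(1,2) b] by simp
      also have "\<dots> = w' $ card {c\<in>C. c < pick C b}" using z(3) pick_in_set_le[OF b] by simp
      also have "\<dots> = w' $ b" using card_pick_le[OF b] by simp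
      finally show "(transpose_mat (submatrix M R C) *\<^sub>v vec (card R) (\<lambda>a. z $ pick R a)) $ b = w' $ b" .
    qed (use w' submatrix_carrier'[OF M R C] in auto)
  qed
next
  assume T: "surjT_mat (submatrix M R C) (card R) (card C)"
  show "surj2 M s R C"
    unfolding surj2_def
  proof
    fix w :: "nat \<Rightarrow> 'a"
    obtain z' where z': "z' \<in> carrier_vec (card R)"
      "transpose_mat (submatrix M R C) *\<^sub>v z' = vec (card C) (\<lambda>b. w (pick C b))"
      using T unfolding surjT_mat_def by (meson vec_carrier)
    define z where "z = vec s (\<lambda>j. if j \<in> R then z' $ card {r\<in>R. r < j} else 0)"
    have zc: "z \<in> carrier_vec s" unfolding z_def by simp
    have zR: "\<forall>j<s. j \<notin> R \<longrightarrow> z $ j = 0" unfolding z_def by simp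
    have finR: "finite R" using R finite_subset by blast
    have zz: "vec (card R) (\<lambda>a. z $ pick R a) = z'"
    proof (rule eq_vecI)
      fix a assume "a < dim_vec z'"
      then have a: "a < card R" using z' by simp
      have "pick R a \<in> R" using pick_in_set_le[OF a] .
      then have "pick R a < s" using R by auto
      then show "vec (card R) (\<lambda>a. z $ pick R a) $ a = z' $ a"
        using a \<open>pick R a \<in> R\<close> card_pick_le[OF a] by (simp add: z_def)
    qed (use z' in simp)
    show "\<exists>z\<in>carrier_vec s. (\<forall>j<s. j \<notin> R \<longrightarrow> z $ j = 0) \<and> (\<forall>i\<in>C. vec_mat z M $ i = w i)"
    proof (intro bexI[OF _ zc] conjI zR ballI)
      fix i assume i: "i \<in> C"
      have finC: "finite C" using C finite_subset by blast
      define b where "b = card {c\<in>C. c < i}"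
      have "{c\<in>C. c < i} \<subset> C" using i by auto
      then have b: "b < card C" unfolding b_def using finC by (simp add: psubset_card_mono)
      have pb: "pick C b = i" unfolding b_def using pick_card_in_set[OF i] .
      have "vec_mat z M $ i = (transpose_mat (submatrix M R C) *\<^sub>v z') $ b"
        using L_sum[OF M R C zc zR b] pb zz by simp
      also have "\<dots> = w i" using z'(2) b pb by simp
      finally show "vec_mat z M $ i = w i" .
    qed
  qed
qed



locale aont_setup =
  fixes M :: "'a::{finite,field} mat" and s :: nat
  assumes M: "M \<in> carrier_mat s s" and inv: "invertible_mat M"
begin

definition "Mi = the (mat_inverse M)"

lemma Mi: "Mi \<in> carrier_mat s s" "M * Mi = 1\<^sub>m s" "Mi * M = 1\<^sub>m s"
  using inverse_facts[OF M inv] unfolding Mi_def by auto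

lemma phi: "linear_aont_map M x = vec_mat x Mi"
  unfolding linear_aont_map_def Mi_def ..

lemma phi_carrier: "linear_aont_map M x \<in> carrier_vec s"
  unfolding phi using Mi(1) vec_mat_carrier[of x Mi] by simp

lemma inv1: "x \<in> carrier_vec s \<Longrightarrow> vec_mat (linear_aont_map M x) M = x"
  unfolding phi using Mi M by (simp add: vec_mat_assoc[of x s Mi s M s] vec_mat_one)

lemma inv2: "y \<in> carrier_vec s \<Longrightarrow> linear_aont_map M (vec_mat y M) = y"
  unfolding phi using Mi M by (simp add: vec_mat_assoc[of y s M s Mi s] vec_mat_one)

lemma vmM_carrier: "vec_mat y M \<in> carrier_vec s"
  using M vec_mat_carrier[of y M] by simp

lemma add_entry:
  assumes x: "x \<in> carrier_vec s" and y: "y \<in> carrier_vec s" and c: "c < 2 * s"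
  shows "array_entry s (linear_aont_map M) (x + y) c
     = array_entry s (linear_aont_map M) x c + array_entry s (linear_aont_map M) y c"
proof (cases "c < s")
  case True
  then show ?thesis using x y by (simp add: array_entry_def)
next
  case False
  then have cs: "c - s < s" using c by simp
  have "vec_mat (x + y) Mi = vec_mat x Mi + vec_mat y Mi"
    using x y Mi(1) by (intro vec_mat_add) auto
  then show ?thesis using False cs Mi(1) by (simp add: array_entry_def phi)
qed

lemma unb_iff:
  assumes "D \<subseteq> {0..<2*s}"
  shows "unbiased s (linear_aont_map M) D \<longleftrightarrow>
    (\<forall>u. \<exists>x\<in>carrier_vec s. \<forall>c\<in>D. array_entry s (linear_aont_map M) x c = u c)"
proof (rule unbiased_iff_surj)
  show "finite D" using assms finite_subset by blast
  fix x y :: "'a vec" and c assume "x \<in> carrier_vec s" "y \<in> carrier_vec s" "c \<in> D"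
  then show "array_entry s (linear_aont_map M) (x + y) c
     = array_entry s (linear_aont_map M) x c + array_entry s (linear_aont_map M) y c"
    using assms add_entry by auto
qed

lemma bij: "bij_betw (linear_aont_map M) (carrier_vec s) (carrier_vec s)"
proof (rule bij_betw_byWitness[where f' = "\<lambda>y. vec_mat y M"])
  show "\<forall>a\<in>carrier_vec s. vec_mat (linear_aont_map M a) M = a" using inv1 by auto
  show "\<forall>a\<in>carrier_vec s. linear_aont_map M (vec_mat a M) = a" using inv2 by auto
  show "linear_aont_map M ` carrier_vec s \<subseteq> carrier_vec s" using phi_carrier by auto
  show "(\<lambda>y. vec_mat y M) ` carrier_vec s \<subseteq> carrier_vec s" using vmM_carrier by auto
qed

lemma unb1: "unbiased s (linear_aont_map M) {0..<s}"
proof -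
  have "\<exists>x\<in>carrier_vec s. \<forall>c\<in>{0..<s}. array_entry s (linear_aont_map M) x c = u c" for u
    by (intro bexI[of _ "vec s u"]) (auto simp: array_entry_def)
  then show ?thesis by (subst unb_iff) auto
qed

lemma unb2: "unbiased s (linear_aont_map M) {s..<2*s}"
proof -
  have "\<exists>x\<in>carrier_vec s. \<forall>c\<in>{s..<2*s}. array_entry s (linear_aont_map M) x c = u c" for u
  proof (intro bexI[of _ "vec_mat (vec s (\<lambda>i. u (i + s))) M"] ballI)
    fix c assume c: "c \<in> {s..<2*s}"
    have "linear_aont_map M (vec_mat (vec s (\<lambda>i. u (i + s))) M) = vec s (\<lambda>i. u (i + s))"
      by (rule inv2) simp
    moreover have "c - s < s" "c - s + s = c" "\<not> c < s" using c by auto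
    ultimately show "array_entry s (linear_aont_map M) (vec_mat (vec s (\<lambda>i. u (i + s))) M) c = u c"
      by (simp add: array_entry_def)
  qed (rule vmM_carrier)
  then show ?thesis by (subst unb_iff) auto
qed

lemma unb3:
  assumes I: "I \<subseteq> {0..<s}" and J: "J \<subseteq> {s..<2*s}"
  shows "unbiased s (linear_aont_map M) (I \<union> J) \<longleftrightarrow> surj2 M s ({0..<s} - (\<lambda>j. j - s) ` J) I"
proof -
  define Jy where "Jy = (\<lambda>j. j - s) ` J"
  define R where "R = {0..<s} - Jy"
  define e where "e = array_entry s (linear_aont_map M)"
  have IJ: "I \<union> J \<subseteq> {0..<2*s}" using I J by auto
  have "(\<forall>u. \<exists>x\<in>carrier_vec s. \<forall>c\<in>I \<union> J. e x c = u c) \<longleftrightarrow> surj2 M s R I"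
  proof
    assume S: "\<forall>u. \<exists>x\<in>carrier_vec s. \<forall>c\<in>I \<union> J. e x c = u c"
    show "surj2 M s R I"
      unfolding surj2_def
    proof
      fix w :: "nat \<Rightarrow> 'a"
      obtain x where x: "x \<in> carrier_vec s" "\<forall>c\<in>I \<union> J. e x c = (if c < s then w c else 0)"
        using S by (erule_tac x="\<lambda>c. if c < s then w c else 0" in allE) blast
      define z where "z = linear_aont_map M x"
      show "\<exists>z\<in>carrier_vec s. (\<forall>j<s. j \<notin> R \<longrightarrow> z $ j = 0) \<and> (\<forall>i\<in>I. vec_mat z M $ i = w i)"
      proof (intro bexI[of _ z] conjI allI impI ballI)
        show "z \<in> carrier_vec s" unfolding z_def by (rule phi_carrier)
        fix j assume j: "j < s" "j \<notin> R"
        then have "j \<in> Jy" unfolding R_def by simp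
        then obtain c where c: "c \<in> J" "j = c - s" unfolding Jy_def by blast
        then have cs: "s \<le> c" using J by auto
        have "e x c = 0" using x(2) c(1) cs by simp
        then show "z $ j = 0" using cs c unfolding e_def z_def array_entry_def by simp
      next
        fix i assume i: "i \<in> I"
        then have is': "i < s" using I by auto
        have "vec_mat z M = x" unfolding z_def by (rule inv1[OF x(1)])
        moreover have "e x i = (if i < s then w i else 0)" using x(2) i by blast
        ultimately show "vec_mat z M $ i = w i" using is' unfolding e_def array_entry_def by simp
      qed
    qed
  next
    assume S: "surj2 M s R I"
    show "\<forall>u. \<exists>x\<in>carrier_vec s. \<forall>c\<in>I \<union> J. e x c = u c"
    proof
      fix u :: "nat \<Rightarrow> 'a"
      define y0 where "y0 = vec s (\<lambda>j. if j \<in> Jy then u (j + s) else 0)"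
      have y0c: "y0 \<in> carrier_vec s" unfolding y0_def by simp
      obtain z where z: "z \<in> carrier_vec s" "\<forall>j<s. j \<notin> R \<longrightarrow> z $ j = 0"
        "\<forall>i\<in>I. vec_mat z M $ i = u i - vec_mat y0 M $ i"
        using S unfolding surj2_def by (erule_tac x="\<lambda>i. u i - vec_mat y0 M $ i" in allE) blast
      define y where "y = y0 + z"
      have yc: "y \<in> carrier_vec s" unfolding y_def using y0c z(1) by simp
      define x where "x = vec_mat y M"
      have phix: "linear_aont_map M x = y" unfolding x_def by (rule inv2[OF yc])
      have xsplit: "x = vec_mat y0 M + vec_mat z M"
        unfolding x_def y_def using y0c z(1) M by (intro vec_mat_add) auto
      show "\<exists>x\<in>carrier_vec s. \<forall>c\<in>I \<union> J. e x c = u c"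
      proof (intro bexI[of _ x] ballI)
        show "x \<in> carrier_vec s" unfolding x_def by (rule vmM_carrier)
        fix c assume c: "c \<in> I \<union> J"
        show "e x c = u c"
        proof (cases "c \<in> I")
          case True
          then have cs: "c < s" using I by auto
          have "x $ c = vec_mat y0 M $ c + vec_mat z M $ c"
            unfolding xsplit using cs M by simp
          then show ?thesis using z(3) True cs unfolding e_def array_entry_def by simp
        next
          case False
          then have cJ: "c \<in> J" using c by simp
          then have cs: "s \<le> c" "c < 2 * s" using J by auto
          have jy: "c - s \<in> Jy" unfolding Jy_def using cJ by blast
          have "c - s \<notin> R" unfolding R_def using jy by simp
          then have "z $ (c - s) = 0" using z(2) cs by simp
          moreover have "y0 $ (c - s) = u c" unfolding y0_def using jy cs by simp
          ultimately have "y $ (c - s) = u c" unfolding y_def using cs y0c z(1) by simp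
          then show ?thesis using cs phix unfolding e_def array_entry_def by simp
        qed
      qed
    qed
  qed
  then show ?thesis unfolding e_def R_def Jy_def using unb_iff[OF IJ] by simp
qed

end



lemma rank_surj2:
  fixes M :: "'a::field mat"
  assumes M: "M \<in> carrier_mat s s" and R: "R \<subseteq> {0..<s}" and C: "C \<subseteq> {0..<s}"
  shows "vec_space.rank (card R) (submatrix M R C) = card C \<longleftrightarrow> surj2 M s R C"
proof -
  have A: "submatrix M R C \<in> carrier_mat (card R) (card C)" by (rule submatrix_carrier'[OF M R C])
  show ?thesis
    unfolding rank_iff_inj[OF A] surj2_iff[OF M R C]
    using inj_imp_surjT[OF A] surjT_imp_inj[OF A] by blast
qed

theorem mainTheorem4:
  fixes M :: "'a::{finite,field} mat" and s ti to :: nat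
  assumes "M \<in> carrier_mat s s" and "invertible_mat M"
    and "1 \<le> ti" and "ti \<le> to" and "to \<le> s"
  shows "AONT ti to s (linear_aont_map M) \<longleftrightarrow>
    (\<forall>R C. R \<subseteq> {0..<s} \<longrightarrow> card R = to \<longrightarrow> C \<subseteq> {0..<s} \<longrightarrow> card C = ti \<longrightarrow>
       vec_space.rank to (submatrix M R C) = ti)"
proof -
  interpret aont_setup M s using assms(1,2) by unfold_locales
  have "AONT ti to s (linear_aont_map M) \<longleftrightarrow>
    (\<forall>I J. I \<subseteq> {0..<s} \<longrightarrow> card I = ti \<longrightarrow> J \<subseteq> {s..<2*s} \<longrightarrow> card J = s - to \<longrightarrow>
        surj2 M s ({0..<s} - (\<lambda>j. j - s) ` J) I)"
    unfolding AONT_def using bij unb1 unb2 by (simp add: unb3)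
  also have "\<dots> \<longleftrightarrow> (\<forall>R C. R \<subseteq> {0..<s} \<longrightarrow> card R = to \<longrightarrow> C \<subseteq> {0..<s} \<longrightarrow> card C = ti \<longrightarrow>
       vec_space.rank to (submatrix M R C) = ti)"
  proof
    assume H: "\<forall>I J. I \<subseteq> {0..<s} \<longrightarrow> card I = ti \<longrightarrow> J \<subseteq> {s..<2*s} \<longrightarrow> card J = s - to \<longrightarrow>
        surj2 M s ({0..<s} - (\<lambda>j. j - s) ` J) I"
    show "\<forall>R C. R \<subseteq> {0..<s} \<longrightarrow> card R = to \<longrightarrow> C \<subseteq> {0..<s} \<longrightarrow> card C = ti \<longrightarrow>
       vec_space.rank to (submatrix M R C) = ti"
    proof (intro allI impI)
      fix R C assume R: "R \<subseteq> {0..<s}" "card R = to" and C: "C \<subseteq> {0..<s}" "card C = ti"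
      define J where "J = (\<lambda>j. j + s) ` ({0..<s} - R)"
      have Js: "J \<subseteq> {s..<2*s}" unfolding J_def by auto
      have "card J = card ({0..<s} - R)" unfolding J_def by (rule card_image) (simp add: inj_on_def)
      also have "\<dots> = s - to" using R by (simp add: card_Diff_subset finite_subset)
      finally have cJ: "card J = s - to" .
      have "(\<lambda>j. j - s) ` J = {0..<s} - R" unfolding J_def image_image by simp
      then have eq: "{0..<s} - (\<lambda>j. j - s) ` J = R" using R(1) by blast
      have "surj2 M s R C" using H C Js cJ eq by metis
      then show "vec_space.rank to (submatrix M R C) = ti"
        using rank_surj2[OF M R(1) C(1)] R(2) C(2) by simp
    qed
  next
    assume H: "\<forall>R C. R \<subseteq> {0..<s} \<longrightarrow> card R = to \<longrightarrow> C \<subseteq> {0..<s} \<longrightarrow> card C = ti \<longrightarrow>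
       vec_space.rank to (submatrix M R C) = ti"
    show "\<forall>I J. I \<subseteq> {0..<s} \<longrightarrow> card I = ti \<longrightarrow> J \<subseteq> {s..<2*s} \<longrightarrow> card J = s - to \<longrightarrow>
        surj2 M s ({0..<s} - (\<lambda>j. j - s) ` J) I"
    proof (intro allI impI)
      fix I J assume I: "I \<subseteq> {0..<s}" "card I = ti" and J: "J \<subseteq> {s..<2*s}" "card J = s - to"
      define R where "R = {0..<s} - (\<lambda>j. j - s) ` J"
      have Rs: "R \<subseteq> {0..<s}" unfolding R_def by blast
      have sub: "(\<lambda>j. j - s) ` J \<subseteq> {0..<s}"
      proof
        fix x assume "x \<in> (\<lambda>j. j - s) ` J"
        then obtain j where "j \<in> J" "x = j - s" by blast
        then have "s \<le> j" "j < 2 * s" using J(1) by auto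
        then show "x \<in> {0..<s}" using \<open>x = j - s\<close> by simp
      qed
      have inj: "inj_on (\<lambda>j. j - s) J"
      proof (rule inj_onI)
        fix x y assume "x \<in> J" "y \<in> J" "x - s = y - s"
        moreover have "s \<le> x" "s \<le> y" using \<open>x \<in> J\<close> \<open>y \<in> J\<close> J(1) by auto
        ultimately show "x = y" by simp
      qed
      have "card ((\<lambda>j. j - s) ` J) = s - to" using card_image[OF inj] J(2) by simp
      then have "card R = s - (s - to)" unfolding R_def using sub by (simp add: card_Diff_subset finite_subset)
      then have cR: "card R = to" using assms(5) by simp
      have "vec_space.rank to (submatrix M R I) = ti" using H Rs cR I by blast
      then show "surj2 M s ({0..<s} - (\<lambda>j. j - s) ` J) I"
        using rank_surj2[OF M Rs I(1)] cR I(2) unfolding R_def by simp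
    qed
  qed
  finally show ?thesis .
qed


end
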